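(* Let $M\ge2$, observe $\mathbf y=\mathbf f+\boldsymbol\xi\in\mathbf R^n$ where $\xi_1,\dots,\xi_n$ are i.i.d. centered with variance $\sigma^2$, and for $j=1,\dots,M$ let $\hat{\boldsymbol\mu}_j=A_j\mathbf y+\mathbf b_j$ with deterministic $n\times n$ matrices $A_j$ and deterministic $\mathbf b_j\in\mathbf R^n$. Let $\hat{\boldsymbol\theta}_{\mathrm{pen}}\in\arg\min_{\boldsymbol\theta\in\Lambda^M}H_{\mathrm{pen}}(\boldsymbol\theta)$. Then almost surely \[\|\hat{\boldsymbol\mu}_{\hat{\boldsymbol\theta}_{\mathrm{pen}}}-\mathbf f\|_2^2\le\min_{q=1,\dots,M}\|\hat{\boldsymbol\mu}_q-\mathbf f\|_2^2+\max_{j,k=1,\dots,M}\Big(\Delta_{jk}-\tfrac12\|\hat{\boldsymbol\mu}_j-\hat{\boldsymbol\mu}_k\|_2^2\Big),\] where $\Delta_{jk}=2\boldsymbol\xi^T((A_j-A_k)\mathbf f+\mathbf b_j-\mathbf b_k)+2\big(\boldsymbol\xi^T(A_j-A_k)\boldsymbol\xi-\sigma^2\mathrm{Tr}(A_j-A_k)\big)$. Furthermore, for all $j,k=1,\dots,M$, \[\mathbb E\Big[\tfrac12\|\hat{\boldsymbol\mu}_j-\hat{\boldsymbol\mu}_k\|_2^2\Big]=\tfrac12\|(A_j-A_k)\mathbf f+\mathbf b_j-\mathbf b_k\|_2^2+\tfrac{\sigma^2}{2}\|A_j-A_k\|_F^2.\]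
   Context: $\Lambda^M=\{\boldsymbol\theta\in\mathbf R^M:\sum_j\theta_j=1,\theta_j\ge0\}$. For $\boldsymbol\theta\in\Lambda^M$: $A_{\boldsymbol\theta}=\sum_j\theta_jA_j$, $\mathbf b_{\boldsymbol\theta}=\sum_j\theta_j\mathbf b_j$, $\hat{\boldsymbol\mu}_{\boldsymbol\theta}=A_{\boldsymbol\theta}\mathbf y+\mathbf b_{\boldsymbol\theta}$. $C_p(\boldsymbol\theta)=\|\hat{\boldsymbol\mu}_{\boldsymbol\theta}\|_2^2-2\mathbf y^T\hat{\boldsymbol\mu}_{\boldsymbol\theta}+2\sigma^2\mathrm{Tr}(A_{\boldsymbol\theta})$, $\mathrm{pen}(\boldsymbol\theta)=\sum_j\theta_j\|\hat{\boldsymbol\mu}_{\boldsymbol\theta}-\hat{\boldsymbol\mu}_j\|_2^2$, $H_{\mathrm{pen}}=C_p+\tfrac12\mathrm{pen}$. $\|\cdot\|_F$ is the Frobenius norm. *)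

theory Defs
  imports "HOL-Analysis.Analysis" "HOL-Probability.Probability"
begin

text \<open>Weights are functions nat to real; the relevant coordinates are 1..M.\<close>
definition simplexM :: "nat \<Rightarrow> (nat \<Rightarrow> real) set" where
  "simplexM M = {\<theta>. (\<forall>j\<in>{1..M}. 0 \<le> \<theta> j) \<and> (\<Sum>j\<in>{1..M}. \<theta> j) = 1}"

definition Ath :: "nat \<Rightarrow> (nat \<Rightarrow> real^'n^'n) \<Rightarrow> (nat \<Rightarrow> real) \<Rightarrow> real^'n^'n" where
  "Ath M A \<theta> = (\<Sum>j\<in>{1..M}. \<theta> j *\<^sub>R A j)"

definition bth :: "nat \<Rightarrow> (nat \<Rightarrow> real^'n) \<Rightarrow> (nat \<Rightarrow> real) \<Rightarrow> real^'n" where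
  "bth M b \<theta> = (\<Sum>j\<in>{1..M}. \<theta> j *\<^sub>R b j)"

definition muj :: "(nat \<Rightarrow> real^'n^'n) \<Rightarrow> (nat \<Rightarrow> real^'n) \<Rightarrow> real^'n \<Rightarrow> nat \<Rightarrow> real^'n" where
  "muj A b y j = A j *v y + b j"

definition muth :: "nat \<Rightarrow> (nat \<Rightarrow> real^'n^'n) \<Rightarrow> (nat \<Rightarrow> real^'n) \<Rightarrow> real^'n \<Rightarrow> (nat \<Rightarrow> real) \<Rightarrow> real^'n" where
  "muth M A b y \<theta> = Ath M A \<theta> *v y + bth M b \<theta>"

definition Cp :: "nat \<Rightarrow> (nat \<Rightarrow> real^'n^'n) \<Rightarrow> (nat \<Rightarrow> real^'n) \<Rightarrow> real \<Rightarrow> real^'n \<Rightarrow> (nat \<Rightarrow> real) \<Rightarrow> real" where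
  "Cp M A b \<sigma> y \<theta> = (norm (muth M A b y \<theta>))\<^sup>2 - 2 * (y \<bullet> muth M A b y \<theta>)
      + 2 * \<sigma>\<^sup>2 * trace (Ath M A \<theta>)"

definition pen :: "nat \<Rightarrow> (nat \<Rightarrow> real^'n^'n) \<Rightarrow> (nat \<Rightarrow> real^'n) \<Rightarrow> real^'n \<Rightarrow> (nat \<Rightarrow> real) \<Rightarrow> real" where
  "pen M A b y \<theta> = (\<Sum>j\<in>{1..M}. \<theta> j * (norm (muth M A b y \<theta> - muj A b y j))\<^sup>2)"

definition Hpen :: "nat \<Rightarrow> (nat \<Rightarrow> real^'n^'n) \<Rightarrow> (nat \<Rightarrow> real^'n) \<Rightarrow> real \<Rightarrow> real^'n \<Rightarrow> (nat \<Rightarrow> real) \<Rightarrow> real" where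
  "Hpen M A b \<sigma> y \<theta> = Cp M A b \<sigma> y \<theta> + pen M A b y \<theta> / 2"

definition frob_norm :: "real^'n^'m \<Rightarrow> real" where
  "frob_norm X = sqrt (\<Sum>i\<in>UNIV. \<Sum>k\<in>UNIV. (X $ i $ k)\<^sup>2)"

definition Delta :: "(nat \<Rightarrow> real^'n^'n) \<Rightarrow> (nat \<Rightarrow> real^'n) \<Rightarrow> real \<Rightarrow> real^'n \<Rightarrow> real^'n \<Rightarrow> nat \<Rightarrow> nat \<Rightarrow> real" where
  "Delta A b \<sigma> f \<xi> j k =
     2 * (\<xi> \<bullet> ((A j - A k) *v f + b j - b k))
     + 2 * (\<xi> \<bullet> ((A j - A k) *v \<xi>) - \<sigma>\<^sup>2 * trace (A j - A k))"

end

theory Submission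
  imports Defs
begin


lemma nonneg_from_small:
  fixes g a :: real
  assumes a: "a \<ge> 0" and h: "\<And>t. 0 < t \<Longrightarrow> t \<le> 1 \<Longrightarrow> 0 \<le> g + t * a"
  shows "0 \<le> g"
proof (rule ccontr)
  assume "\<not> 0 \<le> g"
  hence g: "g < 0" by simp
  define t where "t = min 1 (-g / (2*(a+1)))"
  have "0 < -g / (2*(a+1))" using g a by (intro divide_pos_pos) auto
  hence t0: "0 < t" by (simp add: t_def)
  have t1: "t \<le> 1" by (simp add: t_def)
  have "t * a \<le> (-g / (2*(a+1))) * a" using a by (intro mult_right_mono) (auto simp: t_def)
  also have "\<dots> = (-g) * (a / (2*(a+1)))" by simp
  also have "\<dots> < (-g) * 1"
  proof (rule mult_strict_left_mono)
    show "a / (2*(a+1)) < 1" using a by (simp add: field_simps)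
  qed (use g in simp)
  finally show False using h[OF t0 t1] by simp
qed

lemma sum_lin3: "(\<Sum>j\<in>I. (\<theta> j::real) * (a * X j + b * Y j + d * Z j))
   = a * (\<Sum>j\<in>I. \<theta> j * X j) + b * (\<Sum>j\<in>I. \<theta> j * Y j) + d * (\<Sum>j\<in>I. \<theta> j * Z j)"
  by (simp add: sum.distrib sum_distrib_left algebra_simps)

lemma abstract_ineq:
  fixes m :: "nat \<Rightarrow> 'a::real_inner" and \<theta> :: "nat \<Rightarrow> real" and tr :: "nat \<Rightarrow> real"
    and y f \<xi> :: 'a and s :: real and M :: nat
  defines "mu \<equiv> \<lambda>\<theta>. (\<Sum>j\<in>{1..M}. \<theta> j *\<^sub>R m j)"
  defines "G \<equiv> \<lambda>\<theta>. (norm (mu \<theta>))\<^sup>2 - 2 * (y \<bullet> mu \<theta>) + 2 * s * (\<Sum>j\<in>{1..M}. \<theta> j * tr j)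
               + (\<Sum>j\<in>{1..M}. \<theta> j * (norm (mu \<theta> - m j))\<^sup>2) / 2"
  assumes y: "y = f + \<xi>" and th: "\<theta> \<in> simplexM M" and q: "q \<in> {1..M}"
    and minimal: "\<forall>\<theta>'\<in>simplexM M. G \<theta> \<le> G \<theta>'"
  shows "(norm (mu \<theta> - f))\<^sup>2 \<le> (norm (m q - f))\<^sup>2 +
     (\<Sum>j\<in>{1..M}. \<theta> j * (2 * (\<xi> \<bullet> (m j - m q)) - 2 * s * (tr j - tr q) - (norm (m j - m q))\<^sup>2 / 2))"
proof -
  define c where "c j = - 2 * (y \<bullet> m j) + 2 * s * tr j + (norm (m j))\<^sup>2 / 2" for j
  have Gform: "G \<phi> = (norm (mu \<phi>))\<^sup>2 / 2 + (\<Sum>j\<in>{1..M}. \<phi> j * c j)"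
    if s1: "(\<Sum>j\<in>{1..M}. \<phi> j) = 1" for \<phi>
  proof -
    have e: "(norm (mu \<phi> - m j))\<^sup>2 = 1 * (norm (mu \<phi>))\<^sup>2 + (-2) * (mu \<phi> \<bullet> m j) + 1 * (norm (m j))\<^sup>2" for j
      unfolding power2_norm_eq_inner by (simp add: inner_diff_left inner_diff_right inner_commute)
    have mm: "(\<Sum>j\<in>{1..M}. \<phi> j * (mu \<phi> \<bullet> m j)) = (norm (mu \<phi>))\<^sup>2"
      unfolding power2_norm_eq_inner by (simp add: mu_def inner_sum_right)
    have cst: "(\<Sum>j\<in>{1..M}. \<phi> j * (norm (mu \<phi>))\<^sup>2) = (norm (mu \<phi>))\<^sup>2"
      using s1 by (simp flip: sum_distrib_right)
    have p: "(\<Sum>j\<in>{1..M}. \<phi> j * (norm (mu \<phi> - m j))\<^sup>2)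
        = (\<Sum>j\<in>{1..M}. \<phi> j * (norm (m j))\<^sup>2) - (norm (mu \<phi>))\<^sup>2"
      unfolding e sum_lin3 mm cst by simp
    have yy: "(\<Sum>j\<in>{1..M}. \<phi> j * (y \<bullet> m j)) = y \<bullet> mu \<phi>"
      by (simp add: mu_def inner_sum_right)
    have cc: "(\<Sum>j\<in>{1..M}. \<phi> j * c j) = (-2) * (y \<bullet> mu \<phi>) + (2 * s) * (\<Sum>j\<in>{1..M}. \<phi> j * tr j) + (1/2) * (\<Sum>j\<in>{1..M}. \<phi> j * (norm (m j))\<^sup>2)"
    proof -
      have "(\<Sum>j\<in>{1..M}. \<phi> j * c j) = (\<Sum>j\<in>{1..M}. \<phi> j * ((-2) * (y \<bullet> m j) + (2 * s) * tr j + (1/2) * (norm (m j))\<^sup>2))"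
        by (simp add: c_def)
      then show ?thesis unfolding sum_lin3 yy .
    qed
    show ?thesis unfolding G_def p cc by (simp add: field_simps)
  qed
  have sum1: "(\<Sum>j\<in>{1..M}. \<theta> j) = 1" and pos: "\<forall>j\<in>{1..M}. 0 \<le> \<theta> j"
    using th by (auto simp: simplexM_def)
  define e where "e = (\<lambda>j. if j = q then (1::real) else 0)"
  define C where "C = (\<Sum>j\<in>{1..M}. \<theta> j * c j)"
  define v where "v = m q - mu \<theta>"
  define g where "g = mu \<theta> \<bullet> v + c q - C"
  have tmix: "G (\<lambda>j. (1 - t) * \<theta> j + t * e j) = G \<theta> + t * g + t\<^sup>2 / 2 * (norm v)\<^sup>2"
    and tin: "0 \<le> t \<Longrightarrow> t \<le> 1 \<Longrightarrow> (\<lambda>j. (1 - t) * \<theta> j + t * e j) \<in> simplexM M" for t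
  proof -
    have e1: "(\<Sum>j\<in>{1..M}. e j) = 1" using q by (simp add: e_def)
    have "(\<Sum>j\<in>{1..M}. e j *\<^sub>R m j) = (\<Sum>j\<in>{1..M}. if j = q then m j else 0)"
      by (rule sum.cong) (auto simp: e_def)
    then have em: "(\<Sum>j\<in>{1..M}. e j *\<^sub>R m j) = m q" using q by simp
    have "(\<Sum>j\<in>{1..M}. e j * c j) = (\<Sum>j\<in>{1..M}. if j = q then c j else 0)"
      by (rule sum.cong) (auto simp: e_def)
    then have ec: "(\<Sum>j\<in>{1..M}. e j * c j) = c q" using q by simp
    have se: "(\<Sum>j\<in>{1..M}. (1 - t) * \<theta> j + t * e j) = 1"
    proof -
      have "(\<Sum>j\<in>{1..M}. (1 - t) * \<theta> j + t * e j) = (1 - t) * (\<Sum>j\<in>{1..M}. \<theta> j) + t * (\<Sum>j\<in>{1..M}. e j)"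
        by (simp add: sum.distrib sum_distrib_left)
      then show ?thesis using sum1 e1 by simp
    qed
    have me: "mu (\<lambda>j. (1 - t) * \<theta> j + t * e j) = mu \<theta> + t *\<^sub>R v"
    proof -
      have "mu (\<lambda>j. (1 - t) * \<theta> j + t * e j) = (1 - t) *\<^sub>R mu \<theta> + t *\<^sub>R (\<Sum>j\<in>{1..M}. e j *\<^sub>R m j)"
        unfolding mu_def by (simp add: sum.distrib scaleR_sum_right scaleR_add_left)
      then show ?thesis unfolding em v_def by (simp add: algebra_simps)
    qed
    have ce: "(\<Sum>j\<in>{1..M}. ((1 - t) * \<theta> j + t * e j) * c j) = C + t * (c q - C)"
    proof -
      have "(\<Sum>j\<in>{1..M}. ((1 - t) * \<theta> j + t * e j) * c j) = (1 - t) * C + t * (\<Sum>j\<in>{1..M}. e j * c j)"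
        unfolding C_def by (simp add: sum.distrib sum_distrib_left distrib_right mult.assoc)
      then show ?thesis unfolding ec by (simp add: algebra_simps)
    qed
    have nn: "(norm (mu \<theta> + t *\<^sub>R v))\<^sup>2 = (norm (mu \<theta>))\<^sup>2 + 2 * t * (mu \<theta> \<bullet> v) + t\<^sup>2 * (norm v)\<^sup>2"
      unfolding power2_norm_eq_inner by (simp add: inner_add_left inner_add_right inner_commute power2_eq_square)
    show "G (\<lambda>j. (1 - t) * \<theta> j + t * e j) = G \<theta> + t * g + t\<^sup>2 / 2 * (norm v)\<^sup>2"
      unfolding Gform[OF se] Gform[OF sum1] me ce nn
      by (simp add: g_def C_def algebra_simps add_divide_distrib)
    show "0 \<le> t \<Longrightarrow> t \<le> 1 \<Longrightarrow> (\<lambda>j. (1 - t) * \<theta> j + t * e j) \<in> simplexM M"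
      using se pos by (auto simp: simplexM_def e_def)
  qed
  have "0 \<le> g"
  proof (rule nonneg_from_small[of "(norm v)\<^sup>2 / 2"])
    fix t :: real assume "0 < t" "t \<le> 1"
    with minimal tin[of t] tmix[of t] have "0 \<le> t * g + t\<^sup>2 / 2 * (norm v)\<^sup>2" by force
    hence "0 \<le> t * (g + t * ((norm v)\<^sup>2 / 2))" by (simp add: algebra_simps power2_eq_square)
    thus "0 \<le> g + t * ((norm v)\<^sup>2 / 2)" using \<open>0 < t\<close> by (simp add: zero_le_mult_iff)
  qed simp
  have "(\<lambda>j. (1 - 1) * \<theta> j + 1 * e j) = e" by simp
  note key = \<open>0 \<le> g\<close>
  define T where "T = (\<Sum>j\<in>{1..M}. \<theta> j * tr j)"
  define S where "S = (\<Sum>j\<in>{1..M}. \<theta> j * (norm (m j))\<^sup>2)"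
  have a1: "(\<Sum>j\<in>{1..M}. \<theta> j * (\<xi> \<bullet> (m j - m q))) = \<xi> \<bullet> mu \<theta> - \<xi> \<bullet> m q"
  proof -
    have "(\<Sum>j\<in>{1..M}. \<theta> j * (\<xi> \<bullet> (m j - m q))) = (\<Sum>j\<in>{1..M}. \<theta> j * (\<xi> \<bullet> m j)) - (\<Sum>j\<in>{1..M}. \<theta> j) * (\<xi> \<bullet> m q)"
      by (simp add: inner_diff_right right_diff_distrib sum_subtractf sum_distrib_right)
    then show ?thesis using sum1 by (simp add: mu_def inner_sum_right)
  qed
  have a2: "(\<Sum>j\<in>{1..M}. \<theta> j * (tr j - tr q)) = T - tr q"
  proof -
    have "(\<Sum>j\<in>{1..M}. \<theta> j * (tr j - tr q)) = T - (\<Sum>j\<in>{1..M}. \<theta> j) * tr q"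
      by (simp add: T_def right_diff_distrib sum_subtractf sum_distrib_right)
    then show ?thesis using sum1 by simp
  qed
  have a3: "(\<Sum>j\<in>{1..M}. \<theta> j * (norm (m j - m q))\<^sup>2) = S - 2 * (mu \<theta> \<bullet> m q) + (norm (m q))\<^sup>2"
  proof -
    have e: "(norm (m j - m q))\<^sup>2 = (norm (m j))\<^sup>2 - 2 * (m j \<bullet> m q) + (norm (m q))\<^sup>2" for j
      unfolding power2_norm_eq_inner by (simp add: inner_diff_left inner_diff_right inner_commute)
    have "(\<Sum>j\<in>{1..M}. \<theta> j * (norm (m j - m q))\<^sup>2) = S - 2 * (\<Sum>j\<in>{1..M}. \<theta> j * (m j \<bullet> m q)) + (\<Sum>j\<in>{1..M}. \<theta> j) * (norm (m q))\<^sup>2"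
      unfolding e S_def by (simp add: algebra_simps sum.distrib sum_subtractf sum_distrib_left sum_distrib_right)
    moreover have "(\<Sum>j\<in>{1..M}. \<theta> j * (m j \<bullet> m q)) = mu \<theta> \<bullet> m q"
      by (simp add: mu_def inner_sum_left)
    ultimately show ?thesis using sum1 by simp
  qed
  have lin: "(\<Sum>j\<in>{1..M}. \<theta> j * (2 * X j - 2 * s * Y j - Z j / 2))
     = 2 * (\<Sum>j\<in>{1..M}. \<theta> j * X j) - 2 * s * (\<Sum>j\<in>{1..M}. \<theta> j * Y j) - (\<Sum>j\<in>{1..M}. \<theta> j * Z j) / 2"
    for X Y Z :: "nat \<Rightarrow> real"
    by (simp add: sum_subtractf sum.distrib sum_distrib_left algebra_simps sum_divide_distrib)
  have r: "(\<Sum>j\<in>{1..M}. \<theta> j * (2 * (\<xi> \<bullet> (m j - m q)) - 2 * s * (tr j - tr q) - (norm (m j - m q))\<^sup>2 / 2))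
     = 2 * (\<xi> \<bullet> mu \<theta> - \<xi> \<bullet> m q) - 2 * s * (T - tr q) - (S - 2 * (mu \<theta> \<bullet> m q) + (norm (m q))\<^sup>2) / 2"
    using lin[of "\<lambda>j. \<xi> \<bullet> (m j - m q)" "\<lambda>j. tr j - tr q" "\<lambda>j. (norm (m j - m q))\<^sup>2"] a1 a2 a3 by simp
  have lin2: "(\<Sum>j\<in>{1..M}. \<theta> j * (- 2 * X j + 2 * s * Y j + Z j / 2))
     = - 2 * (\<Sum>j\<in>{1..M}. \<theta> j * X j) + 2 * s * (\<Sum>j\<in>{1..M}. \<theta> j * Y j) + (\<Sum>j\<in>{1..M}. \<theta> j * Z j) / 2"
    for X Y Z :: "nat \<Rightarrow> real"
    by (simp add: sum.distrib sum_subtractf sum_negf sum_distrib_left algebra_simps sum_divide_distrib)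
  have "(\<Sum>j\<in>{1..M}. \<theta> j * (y \<bullet> m j)) = y \<bullet> mu \<theta>" by (simp add: mu_def inner_sum_right)
  then have Cexp: "C = - 2 * (y \<bullet> mu \<theta>) + 2 * s * T + S / 2"
    unfolding C_def c_def T_def S_def using lin2[of "\<lambda>j. y \<bullet> m j" tr "\<lambda>j. (norm (m j))\<^sup>2"] by simp
  have n1: "(norm (mu \<theta> - f))\<^sup>2 = (norm (mu \<theta>))\<^sup>2 - 2 * (f \<bullet> mu \<theta>) + (norm f)\<^sup>2"
    unfolding power2_norm_eq_inner by (simp add: inner_diff_left inner_diff_right inner_commute)
  have n2: "(norm (m q - f))\<^sup>2 = (norm (m q))\<^sup>2 - 2 * (f \<bullet> m q) + (norm f)\<^sup>2"
    unfolding power2_norm_eq_inner by (simp add: inner_diff_left inner_diff_right inner_commute)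
  have n3: "mu \<theta> \<bullet> v = mu \<theta> \<bullet> m q - (norm (mu \<theta>))\<^sup>2"
    unfolding v_def power2_norm_eq_inner by (simp add: inner_diff_right)
  have y1: "y \<bullet> mu \<theta> = f \<bullet> mu \<theta> + \<xi> \<bullet> mu \<theta>" and y2: "y \<bullet> m q = f \<bullet> m q + \<xi> \<bullet> m q"
    unfolding y by (simp_all add: inner_add_left)
  have gq: "0 \<le> mu \<theta> \<bullet> m q - (norm (mu \<theta>))\<^sup>2 + (- 2 * (y \<bullet> m q) + 2 * s * tr q + (norm (m q))\<^sup>2 / 2) - (- 2 * (y \<bullet> mu \<theta>) + 2 * s * T + S / 2)"
    using key unfolding g_def n3 Cexp c_def .
  show ?thesis unfolding r n1 n2 using gq y1 y2 by (simp add: algebra_simps add_divide_distrib diff_divide_distrib)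
qed



lemma scaleR_mat_mv: "((c::real) *\<^sub>R (X::real^'n^'m)) *v x = c *\<^sub>R (X *v x)"
  by (simp add: vec_eq_iff matrix_vector_mult_def sum_distrib_left algebra_simps)

lemma sum_mat_mv: "finite I \<Longrightarrow> (\<Sum>i\<in>I. F i) *v (x::real^'n) = (\<Sum>i\<in>I. (F i :: real^'n^'m) *v x)"
  by (induct rule: finite_induct) (auto simp: matrix_vector_mult_add_rdistrib)

lemma muth_sum: "muth M A b y \<theta> = (\<Sum>j\<in>{1..M}. \<theta> j *\<^sub>R muj A b y j)"
  unfolding muth_def Ath_def bth_def muj_def
  by (simp add: sum_mat_mv scaleR_mat_mv scaleR_add_right sum.distrib)

lemma trace_Ath: "trace (Ath M A \<theta>) = (\<Sum>j\<in>{1..M}. \<theta> j * trace (A j))"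
  unfolding Ath_def trace_def by (simp add: sum_distrib_left sum.swap[of _ UNIV])

lemma Hpen_eq: "Hpen M A b \<sigma> y \<theta> =
   (norm (\<Sum>j\<in>{1..M}. \<theta> j *\<^sub>R muj A b y j))\<^sup>2 - 2 * (y \<bullet> (\<Sum>j\<in>{1..M}. \<theta> j *\<^sub>R muj A b y j))
    + 2 * \<sigma>\<^sup>2 * (\<Sum>j\<in>{1..M}. \<theta> j * trace (A j))
    + (\<Sum>j\<in>{1..M}. \<theta> j * (norm ((\<Sum>j\<in>{1..M}. \<theta> j *\<^sub>R muj A b y j) - muj A b y j))\<^sup>2) / 2"
  unfolding Hpen_def Cp_def pen_def muth_sum trace_Ath ..

lemma diff_muj: "muj A b (f + \<xi>) j - muj A b (f + \<xi>) q = ((A j - A q) *v f + b j - b q) + (A j - A q) *v \<xi>"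
  unfolding muj_def by (simp add: matrix_vector_mult_diff_rdistrib matrix_vector_right_distrib algebra_simps)

lemma part1:
  fixes f \<xi> :: "real^'n"
  assumes M1: "M \<ge> 1" and th: "\<theta> \<in> simplexM M"
    and minimal: "\<forall>\<theta>'\<in>simplexM M. Hpen M A b \<sigma> (f + \<xi>) \<theta> \<le> Hpen M A b \<sigma> (f + \<xi>) \<theta>'"
  shows "(norm (muth M A b (f + \<xi>) \<theta> - f))\<^sup>2
            \<le> (MIN q\<in>{1..M}. (norm (muj A b (f + \<xi>) q - f))\<^sup>2)
              + Max ((\<lambda>(j, k). Delta A b \<sigma> f \<xi> j k
                        - (norm (muj A b (f + \<xi>) j - muj A b (f + \<xi>) k))\<^sup>2 / 2)
                     ` ({1..M} \<times> {1..M}))"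
proof -
  let ?m = "muj A b (f + \<xi>)"
  have ne: "{1..M} \<noteq> {}" using M1 by auto
  obtain q where q: "q \<in> {1..M}" and qmin: "(norm (?m q - f))\<^sup>2 = (MIN q\<in>{1..M}. (norm (?m q - f))\<^sup>2)"
  proof -
    have "(MIN q\<in>{1..M}. (norm (?m q - f))\<^sup>2) \<in> (\<lambda>q. (norm (?m q - f))\<^sup>2) ` {1..M}"
      using ne by (intro Min_in) auto
    then show ?thesis using that by auto
  qed
  define X where "X j = Delta A b \<sigma> f \<xi> j q - (norm (?m j - ?m q))\<^sup>2 / 2" for j
  let ?Mx = "Max ((\<lambda>(j, k). Delta A b \<sigma> f \<xi> j k - (norm (?m j - ?m k))\<^sup>2 / 2) ` ({1..M} \<times> {1..M}))"
  have ab: "(norm (muth M A b (f + \<xi>) \<theta> - f))\<^sup>2 \<le> (norm (?m q - f))\<^sup>2 +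
     (\<Sum>j\<in>{1..M}. \<theta> j * (2 * (\<xi> \<bullet> (?m j - ?m q)) - 2 * \<sigma>\<^sup>2 * (trace (A j) - trace (A q)) - (norm (?m j - ?m q))\<^sup>2 / 2))"
    unfolding muth_sum
    by (rule abstract_ineq[where y = "f + \<xi>" and tr = "\<lambda>j. trace (A j)"]) (use th q minimal in \<open>simp_all add: Hpen_eq\<close>)
  have Xeq: "2 * (\<xi> \<bullet> (?m j - ?m q)) - 2 * \<sigma>\<^sup>2 * (trace (A j) - trace (A q)) - (norm (?m j - ?m q))\<^sup>2 / 2 = X j" for j
    unfolding X_def Delta_def diff_muj trace_sub by (simp add: inner_add_right algebra_simps)
  have Xle: "X j \<le> ?Mx" if "j \<in> {1..M}" for j
    unfolding X_def using that q by (intro Max_ge) force+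
  have "(\<Sum>j\<in>{1..M}. \<theta> j * X j) \<le> (\<Sum>j\<in>{1..M}. \<theta> j * ?Mx)"
    using th Xle by (intro sum_mono mult_left_mono) (auto simp: simplexM_def)
  also have "\<dots> = ?Mx" using th by (simp add: simplexM_def flip: sum_distrib_right)
  finally show ?thesis using ab qmin unfolding Xeq by linarith
qed



lemma norm_sq_vec: "(norm (x::real^'n))\<^sup>2 = (\<Sum>i\<in>UNIV. (x$i)\<^sup>2)"
  unfolding power2_norm_eq_inner inner_vec_def by (simp add: power2_eq_square)

lemma pointwise:
  fixes D :: "real^'n^'n" and u x :: "real^'n"
  shows "(norm (u + D *v x))\<^sup>2 = (\<Sum>i\<in>UNIV. (u$i)\<^sup>2 + 2 * (u$i) * (\<Sum>l\<in>UNIV. D$i$l * x$l)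
          + (\<Sum>l\<in>UNIV. \<Sum>m\<in>UNIV. (D$i$l * D$i$m) * (x$l * x$m)))"
proof -
  have "((u + D *v x)$i)\<^sup>2 = (u$i)\<^sup>2 + 2 * (u$i) * (\<Sum>l\<in>UNIV. D$i$l * x$l)
          + (\<Sum>l\<in>UNIV. \<Sum>m\<in>UNIV. (D$i$l * D$i$m) * (x$l * x$m))" for i
  proof -
    have s: "(\<Sum>l\<in>UNIV. D$i$l * x$l) * (\<Sum>m\<in>UNIV. D$i$m * x$m) = (\<Sum>l\<in>UNIV. \<Sum>m\<in>UNIV. (D$i$l * D$i$m) * (x$l * x$m))"
      by (simp add: sum_product algebra_simps)
    have e: "(u + D *v x)$i = u$i + (\<Sum>l\<in>UNIV. D$i$l * x$l)" by (simp add: matrix_vector_mult_def)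
    show ?thesis unfolding e power2_eq_square s[symmetric] by (simp add: algebra_simps)
  qed
  then show ?thesis unfolding norm_sq_vec by simp
qed

lemma (in prob_space) part2:
  fixes \<xi> :: "'a \<Rightarrow> real^'n" and D :: "real^'n^'n" and u :: "real^'n"
  assumes meas: "\<And>i. (\<lambda>w. \<xi> w $ i) \<in> borel_measurable M"
    and indep: "indep_vars (\<lambda>_. borel) (\<lambda>i w. \<xi> w $ i) UNIV"
    and sqint: "\<And>i. integrable M (\<lambda>w. (\<xi> w $ i)\<^sup>2)"
    and centered: "\<And>i. expectation (\<lambda>w. \<xi> w $ i) = 0"
    and var: "\<And>i. variance (\<lambda>w. \<xi> w $ i) = \<sigma>\<^sup>2"
  shows "expectation (\<lambda>w. (norm (u + D *v \<xi> w))\<^sup>2 / 2)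
     = (norm u)\<^sup>2 / 2 + \<sigma>\<^sup>2 / 2 * (frob_norm D)\<^sup>2"
proof -
  have I1[simp]: "integrable M (\<lambda>w. \<xi> w $ l)" for l
    by (rule square_integrable_imp_integrable[OF meas sqint])
  have I2[simp]: "integrable M (\<lambda>w. \<xi> w $ l * \<xi> w $ m)" for l m
  proof (cases "l = m")
    case True then show ?thesis using sqint[of l] by (simp add: power2_eq_square)
  next
    case False
    have "indep_vars (\<lambda>_. borel) (\<lambda>i w. \<xi> w $ i) {l, m}" using indep by (rule indep_vars_subset) simp
    then have "integrable M (\<lambda>w. \<Prod>i\<in>{l,m}. \<xi> w $ i)" by (intro indep_vars_integrable) auto
    then show ?thesis using False by simp
  qed
  have E2: "(\<integral>w. \<xi> w $ l * \<xi> w $ m \<partial>M) = (if l = m then \<sigma>\<^sup>2 else 0)" for l m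
  proof (cases "l = m")
    case True then show ?thesis using var[of l] centered[of l] by (simp add: power2_eq_square)
  next
    case False
    have "indep_vars (\<lambda>_. borel) (\<lambda>i w. \<xi> w $ i) {l, m}" using indep by (rule indep_vars_subset) simp
    then have "(\<integral>w. (\<Prod>i\<in>{l,m}. \<xi> w $ i) \<partial>M) = (\<Prod>i\<in>{l,m}. \<integral>w. \<xi> w $ i \<partial>M)"
      by (intro indep_vars_lebesgue_integral) auto
    then show ?thesis using False centered by simp
  qed
  have "expectation (\<lambda>w. (norm (u + D *v \<xi> w))\<^sup>2)
    = (\<Sum>i\<in>UNIV. (u$i)\<^sup>2 + 2 * (u$i) * (\<Sum>l\<in>UNIV. D$i$l * 0)
          + (\<Sum>l\<in>UNIV. \<Sum>m\<in>UNIV. (D$i$l * D$i$m) * (if l = m then \<sigma>\<^sup>2 else 0)))"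
    unfolding pointwise
    by (simp add: integrable_sum integrable_add integrable_mult_right integral_sum integral_add
        integral_mult_right E2 centered prob_space del: mult_if_delta)
  also have "\<dots> = (norm u)\<^sup>2 + \<sigma>\<^sup>2 * (\<Sum>i\<in>UNIV. \<Sum>l\<in>UNIV. (D$i$l)\<^sup>2)"
    unfolding norm_sq_vec by (simp add: sum.distrib sum_distrib_left power2_eq_square if_distrib mult_ac cong: if_cong)
  also have "(\<Sum>i\<in>UNIV. \<Sum>l\<in>UNIV. (D$i$l)\<^sup>2) = (frob_norm D)\<^sup>2"
    unfolding frob_norm_def by (simp add: sum_nonneg)
  finally show ?thesis by simp
qed

theorem proposition3p3:
  fixes P :: "'w measure"
    and \<xi> :: "'w \<Rightarrow> real^'n"
    and f :: "real^'n"
    and \<sigma> :: real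
    and M :: nat
    and A :: "nat \<Rightarrow> real^'n^'n"
    and b :: "nat \<Rightarrow> real^'n"
    and \<theta>hat :: "'w \<Rightarrow> (nat \<Rightarrow> real)"
  assumes P: "prob_space P"
    and M2: "M \<ge> 2"
    and meas: "\<And>i. (\<lambda>w. \<xi> w $ i) \<in> borel_measurable P"
    and indep: "prob_space.indep_vars P (\<lambda>_. borel) (\<lambda>i w. \<xi> w $ i) UNIV"
    and ident: "\<And>i i'. distr P borel (\<lambda>w. \<xi> w $ i) = distr P borel (\<lambda>w. \<xi> w $ i')"
    and sqint: "\<And>i. integrable P (\<lambda>w. (\<xi> w $ i)\<^sup>2)"
    and centered: "\<And>i. prob_space.expectation P (\<lambda>w. \<xi> w $ i) = 0"
    and var: "\<And>i. prob_space.variance P (\<lambda>w. \<xi> w $ i) = \<sigma>\<^sup>2"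
    and argmin: "\<And>w. w \<in> space P \<Longrightarrow> \<theta>hat w \<in> simplexM M \<and>
        (\<forall>\<theta>\<in>simplexM M. Hpen M A b \<sigma> (f + \<xi> w) (\<theta>hat w) \<le> Hpen M A b \<sigma> (f + \<xi> w) \<theta>)"
  shows "(AE w in P.
            (norm (muth M A b (f + \<xi> w) (\<theta>hat w) - f))\<^sup>2
            \<le> (MIN q\<in>{1..M}. (norm (muj A b (f + \<xi> w) q - f))\<^sup>2)
              + Max ((\<lambda>(j, k). Delta A b \<sigma> f (\<xi> w) j k
                        - (norm (muj A b (f + \<xi> w) j - muj A b (f + \<xi> w) k))\<^sup>2 / 2)
                     ` ({1..M} \<times> {1..M})))
       \<and> (\<forall>j\<in>{1..M}. \<forall>k\<in>{1..M}.
            prob_space.expectation P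
              (\<lambda>w. (norm (muj A b (f + \<xi> w) j - muj A b (f + \<xi> w) k))\<^sup>2 / 2)
            = (norm ((A j - A k) *v f + b j - b k))\<^sup>2 / 2
              + \<sigma>\<^sup>2 / 2 * (frob_norm (A j - A k))\<^sup>2)"
proof -
  interpret prob_space P by (rule P)
  have M1: "M \<ge> 1" using M2 by simp
  have AE: "AE w in P.
            (norm (muth M A b (f + \<xi> w) (\<theta>hat w) - f))\<^sup>2
            \<le> (MIN q\<in>{1..M}. (norm (muj A b (f + \<xi> w) q - f))\<^sup>2)
              + Max ((\<lambda>(j, k). Delta A b \<sigma> f (\<xi> w) j k
                        - (norm (muj A b (f + \<xi> w) j - muj A b (f + \<xi> w) k))\<^sup>2 / 2)
                     ` ({1..M} \<times> {1..M}))"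
  proof (rule AE_I2)
    fix w assume "w \<in> space P"
    then show "(norm (muth M A b (f + \<xi> w) (\<theta>hat w) - f))\<^sup>2
            \<le> (MIN q\<in>{1..M}. (norm (muj A b (f + \<xi> w) q - f))\<^sup>2)
              + Max ((\<lambda>(j, k). Delta A b \<sigma> f (\<xi> w) j k
                        - (norm (muj A b (f + \<xi> w) j - muj A b (f + \<xi> w) k))\<^sup>2 / 2)
                     ` ({1..M} \<times> {1..M}))"
      using argmin[of w] M1 by (intro part1) auto
  qed
  have E: "prob_space.expectation P
              (\<lambda>w. (norm (muj A b (f + \<xi> w) j - muj A b (f + \<xi> w) k))\<^sup>2 / 2)
            = (norm ((A j - A k) *v f + b j - b k))\<^sup>2 / 2
              + \<sigma>\<^sup>2 / 2 * (frob_norm (A j - A k))\<^sup>2" for j k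
    unfolding diff_muj
    by (rule part2[OF meas indep sqint centered var])
  show ?thesis using AE E by blast
qed

end
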